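(* Let $k\ge 1$ be an integer and let $G$ be a graph with $\mathrm{diam}(G)\le 2k+1$. Then $\mathrm{gp}(G)\ge \alpha_k(G)$.
   Context: All graphs are finite, simple and connected; $\mathrm{diam}(G)$ is the maximum distance between two vertices. A set $S$ of vertices is a $k$-packing if $d(u,v)>k$ for all distinct $u,v\in S$; $\alpha_k(G)$ is the maximum cardinality of a $k$-packing of $G$. A set of vertices is a general position set if no three of its vertices lie on a common geodesic (shortest path); $\mathrm{gp}(G)$ is the maximum cardinality of a general position set of $G$. *)

theory Defs
  imports Main
begin

definition simple_graph :: "'a set \<Rightarrow> ('a \<Rightarrow> 'a \<Rightarrow> bool) \<Rightarrow> bool" where
  "simple_graph V E \<longleftrightarrow> finite V \<and> V \<noteq> {} \<and>
     (\<forall>u v. E u v \<longrightarrow> u \<in> V \<and> v \<in> V) \<and>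
     (\<forall>u v. E u v \<longrightarrow> E v u) \<and> (\<forall>u. \<not> E u u)"

text \<open>A walk is a nonempty vertex list with consecutive vertices adjacent;
  its length is the number of edges, i.e. length xs - 1.\<close>
definition is_walk :: "'a set \<Rightarrow> ('a \<Rightarrow> 'a \<Rightarrow> bool) \<Rightarrow> 'a list \<Rightarrow> bool" where
  "is_walk V E xs \<longleftrightarrow> xs \<noteq> [] \<and> set xs \<subseteq> V \<and>
     (\<forall>i. Suc i < length xs \<longrightarrow> E (xs ! i) (xs ! Suc i))"

definition connected_graph :: "'a set \<Rightarrow> ('a \<Rightarrow> 'a \<Rightarrow> bool) \<Rightarrow> bool" where
  "connected_graph V E \<longleftrightarrow>
     (\<forall>u\<in>V. \<forall>v\<in>V. \<exists>xs. is_walk V E xs \<and> hd xs = u \<and> last xs = v)"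

definition dist :: "'a set \<Rightarrow> ('a \<Rightarrow> 'a \<Rightarrow> bool) \<Rightarrow> 'a \<Rightarrow> 'a \<Rightarrow> nat" where
  "dist V E u v = (LEAST n. \<exists>xs. is_walk V E xs \<and> hd xs = u \<and> last xs = v \<and> length xs = Suc n)"

definition diam :: "'a set \<Rightarrow> ('a \<Rightarrow> 'a \<Rightarrow> bool) \<Rightarrow> nat" where
  "diam V E = Max {dist V E u v | u v. u \<in> V \<and> v \<in> V}"

definition geodesic :: "'a set \<Rightarrow> ('a \<Rightarrow> 'a \<Rightarrow> bool) \<Rightarrow> 'a list \<Rightarrow> bool" where
  "geodesic V E xs \<longleftrightarrow> is_walk V E xs \<and> length xs = Suc (dist V E (hd xs) (last xs))"

definition k_packing :: "'a set \<Rightarrow> ('a \<Rightarrow> 'a \<Rightarrow> bool) \<Rightarrow> nat \<Rightarrow> 'a set \<Rightarrow> bool" where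
  "k_packing V E k S \<longleftrightarrow> S \<subseteq> V \<and> (\<forall>u\<in>S. \<forall>v\<in>S. u \<noteq> v \<longrightarrow> dist V E u v > k)"

definition packing_number :: "'a set \<Rightarrow> ('a \<Rightarrow> 'a \<Rightarrow> bool) \<Rightarrow> nat \<Rightarrow> nat" where
  "packing_number V E k = Max {card S | S. k_packing V E k S}"

definition gp_set :: "'a set \<Rightarrow> ('a \<Rightarrow> 'a \<Rightarrow> bool) \<Rightarrow> 'a set \<Rightarrow> bool" where
  "gp_set V E S \<longleftrightarrow> S \<subseteq> V \<and>
     (\<forall>u\<in>S. \<forall>v\<in>S. \<forall>w\<in>S. u \<noteq> v \<and> v \<noteq> w \<and> u \<noteq> w \<longrightarrow>
        \<not> (\<exists>P. geodesic V E P \<and> u \<in> set P \<and> v \<in> set P \<and> w \<in> set P))"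

definition gp_number :: "'a set \<Rightarrow> ('a \<Rightarrow> 'a \<Rightarrow> bool) \<Rightarrow> nat" where
  "gp_number V E = Max {card S | S. gp_set V E S}"

end

theory Submission
  imports Defs
begin

lemma walk_dist_le:
  assumes w: "is_walk V E P" and ij: "i \<le> j" "j < length P"
  shows "dist V E (P!i) (P!j) \<le> j - i"
proof -
  define xs where "xs = take (Suc (j - i)) (drop i P)"
  have len: "length xs = Suc (j - i)" using ij by (simp add: xs_def)
  have nth: "\<And>t. t < length xs \<Longrightarrow> xs ! t = P ! (i + t)"
    using ij by (simp add: xs_def)
  have "is_walk V E xs"
    unfolding is_walk_def
  proof (intro conjI allI impI)
    show "xs \<noteq> []" using len by auto
    show "set xs \<subseteq> V" using w unfolding is_walk_def xs_def
      by (meson order_trans set_drop_subset set_take_subset)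
  next
    fix t assume t: "Suc t < length xs"
    have "E (P ! (i + t)) (P ! Suc (i + t))"
      using w t len ij unfolding is_walk_def by auto
    thus "E (xs ! t) (xs ! Suc t)" using nth t by simp
  qed
  moreover have "hd xs = P ! i" using nth[of 0] len hd_conv_nth[of xs] by fastforce
  moreover have "last xs = P ! j" proof -
    have "xs \<noteq> []" using len by auto
    hence "last xs = xs ! (j - i)" using len by (simp add: last_conv_nth)
    also have "\<dots> = P ! (i + (j - i))" using nth len by simp
    finally show ?thesis using ij by simp
  qed
  ultimately have "\<exists>xs. is_walk V E xs \<and> hd xs = P!i \<and> last xs = P!j \<and> length xs = Suc (j - i)"
    using len by blast
  thus ?thesis unfolding dist_def by (rule Least_le)
qed

lemma three_on_walk:
  assumes w: "is_walk V E P" and abc: "a < b" "b < c" "c < length P"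
    and d1: "dist V E (P!a) (P!b) > k" and d2: "dist V E (P!b) (P!c) > k"
  shows "length P \<ge> 2 * k + 3"
proof -
  have "dist V E (P!a) (P!b) \<le> b - a" using walk_dist_le[OF w] abc by simp
  moreover have "dist V E (P!b) (P!c) \<le> c - b" using walk_dist_le[OF w] abc by simp
  ultimately show ?thesis using abc d1 d2 by linarith
qed

theorem corollary4p2:
  fixes V :: "'a set" and E :: "'a \<Rightarrow> 'a \<Rightarrow> bool" and k :: nat
  assumes "simple_graph V E" and "connected_graph V E"
    and "k \<ge> 1"
    and "diam V E \<le> 2 * k + 1"
  shows "gp_number V E \<ge> packing_number V E k"
proof -
  have finV: "finite V" using assms(1) unfolding simple_graph_def by blast
  have finP: "finite {card S | S. k_packing V E k S}"
  proof -
    have "{card S | S. k_packing V E k S} \<subseteq> card ` Pow V"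
      unfolding k_packing_def by auto
    thus ?thesis using finV by (meson finite_Pow_iff finite_imageI finite_subset)
  qed
  have "k_packing V E k {}" unfolding k_packing_def by simp
  hence neP: "{card S | S. k_packing V E k S} \<noteq> {}" by blast
  have "packing_number V E k \<in> {card S | S. k_packing V E k S}"
    unfolding packing_number_def using Max_in[OF finP neP] .
  then obtain S where S: "k_packing V E k S" and cS: "packing_number V E k = card S" by blast
  have finD: "finite {dist V E u v | u v. u \<in> V \<and> v \<in> V}"
  proof -
    have "{dist V E u v | u v. u \<in> V \<and> v \<in> V} = (\<lambda>(u,v). dist V E u v) ` (V \<times> V)" by auto
    thus ?thesis using finV by simp
  qed
  have gp: "gp_set V E S"
    unfolding gp_set_def
  proof (intro conjI ballI impI notI)
    show "S \<subseteq> V" using S unfolding k_packing_def by blast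
  next
    fix u v w assume u: "u \<in> S" and v: "v \<in> S" and ww: "w \<in> S"
      and dd: "u \<noteq> v \<and> v \<noteq> w \<and> u \<noteq> w"
      and "\<exists>P. geodesic V E P \<and> u \<in> set P \<and> v \<in> set P \<and> w \<in> set P"
    then obtain P where g: "geodesic V E P" and inP: "u \<in> set P" "v \<in> set P" "w \<in> set P" by blast
    have wk: "is_walk V E P" using g unfolding geodesic_def by blast
    have pk: "\<And>x y. x \<in> S \<Longrightarrow> y \<in> S \<Longrightarrow> x \<noteq> y \<Longrightarrow> dist V E x y > k"
      using S unfolding k_packing_def by blast
    obtain i j l where ij: "i < length P" "P!i = u" "j < length P" "P!j = v"
      "l < length P" "P!l = w" using inP by (metis in_set_conv_nth)
    have dist3: "i \<noteq> j" "j \<noteq> l" "i \<noteq> l" using ij dd by auto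
    have long: "length P \<ge> 2 * k + 3"
    proof -
      have D: "\<And>a b. a \<in> {i,j,l} \<Longrightarrow> b \<in> {i,j,l} \<Longrightarrow> a \<noteq> b \<Longrightarrow> dist V E (P!a) (P!b) > k"
      proof -
        fix a b assume a: "a \<in> {i,j,l}" and b: "b \<in> {i,j,l}" and ab: "a \<noteq> b"
        have "P!a \<in> S" using a ij u v ww by blast
        moreover have "P!b \<in> S" using b ij u v ww by blast
        moreover have "P!a \<noteq> P!b" using a b ab ij(2,4,6) dd by fastforce
        ultimately show "dist V E (P!a) (P!b) > k" by (rule pk)
      qed
      have L: "\<And>a b c. a \<in> {i,j,l} \<Longrightarrow> b \<in> {i,j,l} \<Longrightarrow> c \<in> {i,j,l} \<Longrightarrow> a < b \<Longrightarrow> b < c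
          \<Longrightarrow> length P \<ge> 2 * k + 3"
      proof -
        fix a b c assume a: "a \<in> {i,j,l}" and b: "b \<in> {i,j,l}" and c: "c \<in> {i,j,l}"
          and ab: "a < b" and bc: "b < c"
        have cl: "c < length P" using c ij by auto
        have d1: "dist V E (P!a) (P!b) > k" using D[OF a b] ab by simp
        have d2: "dist V E (P!b) (P!c) > k" using D[OF b c] bc by simp
        show "length P \<ge> 2 * k + 3" by (rule three_on_walk[OF wk ab bc cl d1 d2])
      qed
      show ?thesis
              proof -
        have m: "i \<in> {i,j,l}" "j \<in> {i,j,l}" "l \<in> {i,j,l}" by simp_all
        show ?thesis
        proof (cases "i < j")
          case True
          then show ?thesis
            using L[OF m(1) m(2) m(3)] L[OF m(1) m(3) m(2)] L[OF m(3) m(1) m(2)] dist3 by linarith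
        next
          case False
          then show ?thesis
            using L[OF m(2) m(1) m(3)] L[OF m(2) m(3) m(1)] L[OF m(3) m(2) m(1)] dist3 by linarith
        qed
      qed
    qed
    have "dist V E (hd P) (last P) = length P - 1" using g unfolding geodesic_def by simp
    moreover have "dist V E (hd P) (last P) \<le> diam V E"
    proof -
      have "hd P \<in> V" "last P \<in> V" using wk unfolding is_walk_def by auto
      hence "dist V E (hd P) (last P) \<in> {dist V E u v | u v. u \<in> V \<and> v \<in> V}" by blast
      thus ?thesis unfolding diam_def using finD by simp
    qed
    ultimately show False using long assms(4) by linarith
  qed
  have finG: "finite {card S | S. gp_set V E S}"
  proof -
    have "{card S | S. gp_set V E S} \<subseteq> card ` Pow V"
      unfolding gp_set_def by auto
    thus ?thesis using finV by (meson finite_Pow_iff finite_imageI finite_subset)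
  qed
  have "card S \<le> gp_number V E"
    unfolding gp_number_def using gp finG by (intro Max_ge) auto
  thus ?thesis using cS by simp
qed

end
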